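(* $R_3(VS)\le 68$: every 3-coloring of $[68]$ contains two integers $a<b$ in $[68]$ of the same color with $b-a$ a positive perfect square.
   Context: For $n\in\mathbb{N}$, $[n]=\{1,\dots,n\}$; a $c$-coloring of $[n]$ is a function $[n]\to[c]$. $R_c(VS)$ (the van der Square number) is the least positive integer $n$ such that every $c$-coloring of $[n]$ contains integers $a<b$ in $[n]$ of the same color with $b-a=x^2$ for some positive integer $x$. *)

theory Defs
  imports Main
begin

definition has_mono_square :: "nat \<Rightarrow> nat \<Rightarrow> (nat \<Rightarrow> nat) \<Rightarrow> bool" where
  "has_mono_square c n f \<longleftrightarrow>
     (\<exists>a\<in>{1..n}. \<exists>b\<in>{1..n}. \<exists>x::nat. a < b \<and> x > 0 \<and> b - a = x^2 \<and> f a = f b)"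

definition vdS_property :: "nat \<Rightarrow> nat \<Rightarrow> bool" where
  "vdS_property c n \<longleftrightarrow>
     (\<forall>f. (\<forall>i\<in>{1..n}. f i \<in> {1..c}) \<longrightarrow> has_mono_square c n f)"

definition vdS_number :: "nat \<Rightarrow> nat" where
  "vdS_number c = (LEAST n. n > 0 \<and> vdS_property c n)"

end

theory Submission
  imports Defs
begin

lemma dia: "(x::nat) \<noteq> y \<Longrightarrow> x \<noteq> z \<Longrightarrow> y \<noteq> z \<Longrightarrow> x \<noteq> w \<Longrightarrow> y \<noteq> w
  \<Longrightarrow> x \<in> {1..3} \<Longrightarrow> y \<in> {1..3} \<Longrightarrow> z \<in> {1..3} \<Longrightarrow> w \<in> {1..3} \<Longrightarrow> w = z"
  by auto

lemma k4: "(a::nat) \<noteq> b \<Longrightarrow> a \<noteq> c \<Longrightarrow> a \<noteq> d \<Longrightarrow> b \<noteq> c \<Longrightarrow> b \<noteq> d \<Longrightarrow> c \<noteq> d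
  \<Longrightarrow> a \<in> {1..3} \<Longrightarrow> b \<in> {1..3} \<Longrightarrow> c \<in> {1..3} \<Longrightarrow> d \<in> {1..3} \<Longrightarrow> False"
  by auto

lemma main:
  assumes r: "\<forall>i\<in>{1..68}. f i \<in> {1..(3::nat)}" and nm: "\<not> has_mono_square 3 68 f"
  shows False
proof -
  have R: "\<And>i. 1 \<le> i \<Longrightarrow> i \<le> 68 \<Longrightarrow> f i \<in> {1..3}" using r by auto
  have ne: "\<And>a b x. 1 \<le> a \<Longrightarrow> b \<le> 68 \<Longrightarrow> a < b \<Longrightarrow> 0 < (x::nat) \<Longrightarrow> b - a = x^2 \<Longrightarrow> f a \<noteq> f b"
    using nm unfolding has_mono_square_def by fastforce
  have n1: "f 1 \<noteq> f 26" by (rule ne[of 1 26 5]) simp_all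
  have n2: "f 1 \<noteq> f 10" by (rule ne[of 1 10 3]) simp_all
  have n3: "f 10 \<noteq> f 26" by (rule ne[of 10 26 4]) simp_all
  have n4: "f 26 \<noteq> f 10" using n3  by metis
  have n5: "f 1 \<noteq> f 17" by (rule ne[of 1 17 4]) simp_all
  have n6: "f 17 \<noteq> f 26" by (rule ne[of 17 26 3]) simp_all
  have n7: "f 26 \<noteq> f 17" using n6  by metis
  have s1: "f 17 = f 10" by (rule dia[OF n1 n2 n4 n5 n7]) (rule R; simp)+
  have n8: "f 2 \<noteq> f 27" by (rule ne[of 2 27 5]) simp_all
  have n9: "f 2 \<noteq> f 11" by (rule ne[of 2 11 3]) simp_all
  have n10: "f 11 \<noteq> f 27" by (rule ne[of 11 27 4]) simp_all
  have n11: "f 27 \<noteq> f 11" using n10 s1 by metis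
  have n12: "f 2 \<noteq> f 18" by (rule ne[of 2 18 4]) simp_all
  have n13: "f 18 \<noteq> f 27" by (rule ne[of 18 27 3]) simp_all
  have n14: "f 27 \<noteq> f 18" using n13 s1 by metis
  have s2: "f 18 = f 11" by (rule dia[OF n8 n9 n11 n12 n14]) (rule R; simp)+
  have n15: "f 3 \<noteq> f 28" by (rule ne[of 3 28 5]) simp_all
  have n16: "f 3 \<noteq> f 12" by (rule ne[of 3 12 3]) simp_all
  have n17: "f 12 \<noteq> f 28" by (rule ne[of 12 28 4]) simp_all
  have n18: "f 28 \<noteq> f 12" using n17 s1 s2 by metis
  have n19: "f 3 \<noteq> f 19" by (rule ne[of 3 19 4]) simp_all
  have n20: "f 19 \<noteq> f 28" by (rule ne[of 19 28 3]) simp_all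
  have n21: "f 28 \<noteq> f 19" using n20 s1 s2 by metis
  have s3: "f 19 = f 12" by (rule dia[OF n15 n16 n18 n19 n21]) (rule R; simp)+
  have n22: "f 4 \<noteq> f 29" by (rule ne[of 4 29 5]) simp_all
  have n23: "f 4 \<noteq> f 13" by (rule ne[of 4 13 3]) simp_all
  have n24: "f 13 \<noteq> f 29" by (rule ne[of 13 29 4]) simp_all
  have n25: "f 29 \<noteq> f 13" using n24 s1 s2 s3 by metis
  have n26: "f 4 \<noteq> f 20" by (rule ne[of 4 20 4]) simp_all
  have n27: "f 20 \<noteq> f 29" by (rule ne[of 20 29 3]) simp_all
  have n28: "f 29 \<noteq> f 20" using n27 s1 s2 s3 by metis
  have s4: "f 20 = f 13" by (rule dia[OF n22 n23 n25 n26 n28]) (rule R; simp)+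
  have n29: "f 5 \<noteq> f 30" by (rule ne[of 5 30 5]) simp_all
  have n30: "f 5 \<noteq> f 14" by (rule ne[of 5 14 3]) simp_all
  have n31: "f 14 \<noteq> f 30" by (rule ne[of 14 30 4]) simp_all
  have n32: "f 30 \<noteq> f 14" using n31 s1 s2 s3 s4 by metis
  have n33: "f 5 \<noteq> f 21" by (rule ne[of 5 21 4]) simp_all
  have n34: "f 21 \<noteq> f 30" by (rule ne[of 21 30 3]) simp_all
  have n35: "f 30 \<noteq> f 21" using n34 s1 s2 s3 s4 by metis
  have s5: "f 21 = f 14" by (rule dia[OF n29 n30 n32 n33 n35]) (rule R; simp)+
  have n36: "f 6 \<noteq> f 31" by (rule ne[of 6 31 5]) simp_all
  have n37: "f 6 \<noteq> f 15" by (rule ne[of 6 15 3]) simp_all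
  have n38: "f 15 \<noteq> f 31" by (rule ne[of 15 31 4]) simp_all
  have n39: "f 31 \<noteq> f 15" using n38 s1 s2 s3 s4 s5 by metis
  have n40: "f 6 \<noteq> f 22" by (rule ne[of 6 22 4]) simp_all
  have n41: "f 22 \<noteq> f 31" by (rule ne[of 22 31 3]) simp_all
  have n42: "f 31 \<noteq> f 22" using n41 s1 s2 s3 s4 s5 by metis
  have s6: "f 22 = f 15" by (rule dia[OF n36 n37 n39 n40 n42]) (rule R; simp)+
  have n43: "f 7 \<noteq> f 32" by (rule ne[of 7 32 5]) simp_all
  have n44: "f 7 \<noteq> f 16" by (rule ne[of 7 16 3]) simp_all
  have n45: "f 16 \<noteq> f 32" by (rule ne[of 16 32 4]) simp_all
  have n46: "f 32 \<noteq> f 16" using n45 s1 s2 s3 s4 s5 s6 by metis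
  have n47: "f 7 \<noteq> f 23" by (rule ne[of 7 23 4]) simp_all
  have n48: "f 23 \<noteq> f 32" by (rule ne[of 23 32 3]) simp_all
  have n49: "f 32 \<noteq> f 23" using n48 s1 s2 s3 s4 s5 s6 by metis
  have s7: "f 23 = f 16" by (rule dia[OF n43 n44 n46 n47 n49]) (rule R; simp)+
  have n50: "f 8 \<noteq> f 17" by (rule ne[of 8 17 3]) simp_all
  have n51: "f 8 \<noteq> f 10" using n50 s1 s2 s3 s4 s5 s6 s7 by metis
  have n52: "f 8 \<noteq> f 9" by (rule ne[of 8 9 1]) simp_all
  have n53: "f 9 \<noteq> f 10" by (rule ne[of 9 10 1]) simp_all
  have n54: "f 10 \<noteq> f 9" using n53 s1 s2 s3 s4 s5 s6 s7 by metis
  have n55: "f 8 \<noteq> f 12" by (rule ne[of 8 12 2]) simp_all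
  have n56: "f 10 \<noteq> f 19" by (rule ne[of 10 19 3]) simp_all
  have n57: "f 10 \<noteq> f 12" using n56 s1 s2 s3 s4 s5 s6 s7 by metis
  have s8: "f 12 = f 9" by (rule dia[OF n51 n52 n54 n55 n57]) (rule R; simp)+
  have n58: "f 8 \<noteq> f 17" by (rule ne[of 8 17 3]) simp_all
  have n59: "f 8 \<noteq> f 10" using n58 s1 s2 s3 s4 s5 s6 s7 s8 by metis
  have n60: "f 8 \<noteq> f 9" by (rule ne[of 8 9 1]) simp_all
  have n61: "f 9 \<noteq> f 10" by (rule ne[of 9 10 1]) simp_all
  have n62: "f 10 \<noteq> f 9" using n61 s1 s2 s3 s4 s5 s6 s7 s8 by metis
  have n63: "f 8 \<noteq> f 33" by (rule ne[of 8 33 5]) simp_all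
  have n64: "f 17 \<noteq> f 33" by (rule ne[of 17 33 4]) simp_all
  have n65: "f 10 \<noteq> f 33" using n64 s1 s2 s3 s4 s5 s6 s7 s8 by metis
  have s9: "f 33 = f 9" by (rule dia[OF n59 n60 n62 n63 n65]) (rule R; simp)+
  have n66: "f 5 \<noteq> f 14" by (rule ne[of 5 14 3]) simp_all
  have n67: "f 5 \<noteq> f 9" by (rule ne[of 5 9 2]) simp_all
  have n68: "f 12 \<noteq> f 21" by (rule ne[of 12 21 3]) simp_all
  have n69: "f 14 \<noteq> f 9" using n68 s1 s2 s3 s4 s5 s6 s7 s8 s9 by metis
  have n70: "f 5 \<noteq> f 30" by (rule ne[of 5 30 5]) simp_all
  have n71: "f 14 \<noteq> f 30" by (rule ne[of 14 30 4]) simp_all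
  have s10: "f 30 = f 9" by (rule dia[OF n66 n67 n69 n70 n71]) (rule R; simp)+
  have n72: "f 3 \<noteq> f 12" by (rule ne[of 3 12 3]) simp_all
  have n73: "f 3 \<noteq> f 9" using n72 s1 s2 s3 s4 s5 s6 s7 s8 s9 s10 by metis
  have n74: "f 3 \<noteq> f 28" by (rule ne[of 3 28 5]) simp_all
  have n75: "f 12 \<noteq> f 28" by (rule ne[of 12 28 4]) simp_all
  have n76: "f 9 \<noteq> f 28" using n75 s1 s2 s3 s4 s5 s6 s7 s8 s9 s10 by metis
  have n77: "f 3 \<noteq> f 39" by (rule ne[of 3 39 6]) simp_all
  have n78: "f 30 \<noteq> f 39" by (rule ne[of 30 39 3]) simp_all
  have n79: "f 9 \<noteq> f 39" using n78 s1 s2 s3 s4 s5 s6 s7 s8 s9 s10 by metis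
  have s11: "f 39 = f 28" by (rule dia[OF n73 n74 n76 n77 n79]) (rule R; simp)+
  have n80: "f 8 \<noteq> f 9" by (rule ne[of 8 9 1]) simp_all
  have n81: "f 8 \<noteq> f 17" by (rule ne[of 8 17 3]) simp_all
  have n82: "f 8 \<noteq> f 10" using n81 s1 s2 s3 s4 s5 s6 s7 s8 s9 s10 s11 by metis
  have n83: "f 9 \<noteq> f 10" by (rule ne[of 9 10 1]) simp_all
  have n84: "f 8 \<noteq> f 24" by (rule ne[of 8 24 4]) simp_all
  have n85: "f 24 \<noteq> f 33" by (rule ne[of 24 33 3]) simp_all
  have n86: "f 9 \<noteq> f 24" using n85 s1 s2 s3 s4 s5 s6 s7 s8 s9 s10 s11 by metis
  have s12: "f 24 = f 10" by (rule dia[OF n80 n82 n83 n84 n86]) (rule R; simp)+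
  have n87: "f 8 \<noteq> f 9" by (rule ne[of 8 9 1]) simp_all
  have n88: "f 8 \<noteq> f 17" by (rule ne[of 8 17 3]) simp_all
  have n89: "f 8 \<noteq> f 10" using n88 s1 s2 s3 s4 s5 s6 s7 s8 s9 s10 s11 s12 by metis
  have n90: "f 9 \<noteq> f 10" by (rule ne[of 9 10 1]) simp_all
  have n91: "f 8 \<noteq> f 44" by (rule ne[of 8 44 6]) simp_all
  have n92: "f 19 \<noteq> f 44" by (rule ne[of 19 44 5]) simp_all
  have n93: "f 9 \<noteq> f 44" using n92 s1 s2 s3 s4 s5 s6 s7 s8 s9 s10 s11 s12 by metis
  have s13: "f 44 = f 10" by (rule dia[OF n87 n89 n90 n91 n93]) (rule R; simp)+
  have n94: "f 6 \<noteq> f 10" by (rule ne[of 6 10 2]) simp_all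
  have n95: "f 6 \<noteq> f 15" by (rule ne[of 6 15 3]) simp_all
  have n96: "f 15 \<noteq> f 24" by (rule ne[of 15 24 3]) simp_all
  have n97: "f 10 \<noteq> f 15" using n96 s1 s2 s3 s4 s5 s6 s7 s8 s9 s10 s11 s12 s13 by metis
  have n98: "f 6 \<noteq> f 42" by (rule ne[of 6 42 6]) simp_all
  have n99: "f 17 \<noteq> f 42" by (rule ne[of 17 42 5]) simp_all
  have n100: "f 10 \<noteq> f 42" using n99 s1 s2 s3 s4 s5 s6 s7 s8 s9 s10 s11 s12 s13 by metis
  have s14: "f 42 = f 15" by (rule dia[OF n94 n95 n97 n98 n100]) (rule R; simp)+
  have n101: "f 6 \<noteq> f 15" by (rule ne[of 6 15 3]) simp_all
  have n102: "f 6 \<noteq> f 10" by (rule ne[of 6 10 2]) simp_all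
  have n103: "f 15 \<noteq> f 24" by (rule ne[of 15 24 3]) simp_all
  have n104: "f 15 \<noteq> f 10" using n103 s1 s2 s3 s4 s5 s6 s7 s8 s9 s10 s11 s12 s13 s14 by metis
  have n105: "f 6 \<noteq> f 31" by (rule ne[of 6 31 5]) simp_all
  have n106: "f 15 \<noteq> f 31" by (rule ne[of 15 31 4]) simp_all
  have s15: "f 31 = f 10" by (rule dia[OF n101 n102 n104 n105 n106]) (rule R; simp)+
  have n107: "f 9 \<noteq> f 10" by (rule ne[of 9 10 1]) simp_all
  have n108: "f 9 \<noteq> f 18" by (rule ne[of 9 18 3]) simp_all
  have n109: "f 9 \<noteq> f 11" using n108 s1 s2 s3 s4 s5 s6 s7 s8 s9 s10 s11 s12 s13 s14 s15 by metis
  have n110: "f 9 \<noteq> f 13" by (rule ne[of 9 13 2]) simp_all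
  have n111: "f 10 \<noteq> f 11" by (rule ne[of 10 11 1]) simp_all
  have n112: "f 13 \<noteq> f 17" by (rule ne[of 13 17 2]) simp_all
  have n113: "f 10 \<noteq> f 13" using n112 s1 s2 s3 s4 s5 s6 s7 s8 s9 s10 s11 s12 s13 s14 s15 by metis
  have n114: "f 11 \<noteq> f 20" by (rule ne[of 11 20 3]) simp_all
  have n115: "f 11 \<noteq> f 13" using n114 s1 s2 s3 s4 s5 s6 s7 s8 s9 s10 s11 s12 s13 s14 s15 by metis
  show False by (rule k4[OF n107 n109 n110 n111 n113 n115]) (rule R; simp)+
qed

theorem theorem4p3:
  shows "vdS_number 3 \<le> 68"
proof -
  have "vdS_property 3 68" unfolding vdS_property_def using main by blast
  then show ?thesis unfolding vdS_number_def by (intro Least_le) simp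
qed

end
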